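(* Let $n \geq 2$ and $a > 0$, and let $F_\pm = (\pm a, 0, \ldots, 0) \in \mathbb{R}^n$. Put $d_{\min} = 2a$. For $d > d_{\min}$ let $$E(d) = \{x \in \mathbb{R}^n : \|x - F_+\|_2 + \|x - F_-\|_2 \leq d\},$$ the solid prolate hyperspheroid with foci $F_\pm$ and transverse diameter $d$. Let $X$ be a random point drawn from the uniform distribution on $E(d_i)$, where $d_i > d_{\min}$ is fixed. Let $d_{i+1} = \|X - F_+\|_2 + \|X - F_-\|_2$ be the transverse diameter of the prolate hyperspheroid with the same foci on whose surface $X$ lies. Then $$\mathbb{E}[d_{i+1}] = \frac{n\, d_i^2 + d_{\min}^2}{(n+1)\, d_i}.$$
   Context: The transverse diameter of a prolate hyperspheroid with foci $F_\pm$ is the length of its major axis. It equals $\|x-F_+\|_2+\|x-F_-\|_2$ for any point $x$ on its surface. The volume of $E(d)$ is $\zeta_n\, d\,(d^2-d_{\min}^2)^{(n-1)/2}/2^n$, where $\zeta_n$ is the volume of the unit $n$-ball. *)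

theory Defs
  imports "HOL-Analysis.Analysis" "HOL-Probability.Probability"
begin

definition focus_plus :: "real \<Rightarrow> 'n::finite \<Rightarrow> real^'n" where
  "focus_plus a k = (\<chi> i. if i = k then a else 0)"

definition focus_minus :: "real \<Rightarrow> 'n::finite \<Rightarrow> real^'n" where
  "focus_minus a k = (\<chi> i. if i = k then - a else 0)"

definition transverse_diam :: "real \<Rightarrow> 'n::finite \<Rightarrow> real^'n \<Rightarrow> real" where
  "transverse_diam a k x = norm (x - focus_plus a k) + norm (x - focus_minus a k)"

definition hyperspheroid :: "real \<Rightarrow> 'n::finite \<Rightarrow> real \<Rightarrow> (real^'n) set" where
  "hyperspheroid a k d = {x. transverse_diam a k x \<le> d}"

end

theory Submission imports Defs begin

lemma norm_sq_vec: "norm (x::real^'n)^2 = (\<Sum>i\<in>UNIV. (x$i)^2)"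
  unfolding power2_norm_eq_inner inner_vec_def by (simp add: power2_eq_square)

lemma fp_sq:
  fixes x :: "real^'n"
  shows "norm (x - focus_plus a k)^2 = (x$k - a)^2 + (\<Sum>i\<in>UNIV-{k}. (x$i)^2)"
    and "norm (x - focus_minus a k)^2 = (x$k + a)^2 + (\<Sum>i\<in>UNIV-{k}. (x$i)^2)"
proof -
  have "norm (x - focus_plus a k)^2 = (\<Sum>i\<in>UNIV. ((x - focus_plus a k)$i)^2)" by (rule norm_sq_vec)
  also have "\<dots> = ((x - focus_plus a k)$k)^2 + (\<Sum>i\<in>UNIV-{k}. ((x - focus_plus a k)$i)^2)"
    by (simp add: sum.remove)
  also have "(\<Sum>i\<in>UNIV-{k}. ((x - focus_plus a k)$i)^2) = (\<Sum>i\<in>UNIV-{k}. (x$i)^2)"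
    by (rule sum.cong) (auto simp: focus_plus_def)
  finally show "norm (x - focus_plus a k)^2 = (x$k - a)^2 + (\<Sum>i\<in>UNIV-{k}. (x$i)^2)"
    by (simp add: focus_plus_def)
  have "norm (x - focus_minus a k)^2 = (\<Sum>i\<in>UNIV. ((x - focus_minus a k)$i)^2)" by (rule norm_sq_vec)
  also have "\<dots> = ((x - focus_minus a k)$k)^2 + (\<Sum>i\<in>UNIV-{k}. ((x - focus_minus a k)$i)^2)"
    by (simp add: sum.remove)
  also have "(\<Sum>i\<in>UNIV-{k}. ((x - focus_minus a k)$i)^2) = (\<Sum>i\<in>UNIV-{k}. (x$i)^2)"
    by (rule sum.cong) (auto simp: focus_minus_def)
  finally show "norm (x - focus_minus a k)^2 = (x$k + a)^2 + (\<Sum>i\<in>UNIV-{k}. (x$i)^2)"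
    by (simp add: focus_minus_def)
qed

lemma core2d:
  fixes a t u r :: real
  assumes a: "a > 0" and t: "t > 2*a" and r: "r \<ge> 0"
  shows "sqrt ((u-a)^2 + r) + sqrt ((u+a)^2 + r) \<le> t \<longleftrightarrow>
         4*u^2/t^2 + 4*r/(t^2 - 4*a^2) \<le> 1"
proof -
  define p where "p = sqrt ((u-a)^2 + r)"
  define q where "q = sqrt ((u+a)^2 + r)"
  define A where "A = t/2 - 2*a*u/t"
  define B where "B = t/2 + 2*a*u/t"
  define S where "S = 1 - (4*u^2/t^2 + 4*r/(t^2 - 4*a^2))"
  have "(2*a)^2 < t^2" using a t by (intro power_strict_mono) auto
  hence tp: "t > 0" "t^2 - 4*a^2 > 0" using a t by (auto simp: power_mult_distrib)
  have nn: "0 \<le> (u - a)^2 + r" "0 \<le> (u + a)^2 + r" using r by (metis add_nonneg_nonneg zero_le_power2)+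
  have p2: "p^2 = (u-a)^2 + r" and q2: "q^2 = (u+a)^2 + r" using nn by (simp_all add: p_def q_def)
  have p0: "p \<ge> 0" "q \<ge> 0" using nn by (auto simp: p_def q_def)
  have eqA: "A^2 - p^2 = (t^2 - 4*a^2)/4 * S"
    using tp unfolding A_def S_def p2 by (simp add: field_simps power2_eq_square)
  have eqB: "B^2 - q^2 = (t^2 - 4*a^2)/4 * S"
    using tp unfolding B_def S_def q2 by (simp add: field_simps power2_eq_square)
  have AB: "A + B = t" by (simp add: A_def B_def)
  show ?thesis
  proof
    assume h: "sqrt ((u-a)^2 + r) + sqrt ((u+a)^2 + r) \<le> t"
    show "4*u^2/t^2 + 4*r/(t^2 - 4*a^2) \<le> 1"
    proof (rule ccontr)
      assume "\<not> ?thesis"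
      hence S: "S < 0" by (simp add: S_def)
      have neg: "(t^2 - 4*a^2)/4 * S < 0" using S tp(2) by (intro mult_pos_neg) auto
      have "A^2 < p^2" using eqA neg by linarith
      hence "A < p" using p0(1) by (rule power_less_imp_less_base)
      moreover have "B^2 < q^2" using eqB neg by linarith
      hence "B < q" using p0(2) by (rule power_less_imp_less_base)
      ultimately show False using h AB unfolding p_def q_def by linarith
    qed
  next
    assume h: "4*u^2/t^2 + 4*r/(t^2 - 4*a^2) \<le> 1"
    hence S: "S \<ge> 0" by (simp add: S_def)
    have "4*r/(t^2 - 4*a^2) \<ge> 0" using r tp by simp
    hence "4*u^2/t^2 \<le> 1" using h by linarith
    hence "u^2 \<le> (t/2)^2" using tp by (simp add: field_simps power2_eq_square)
    hence "\<bar>u\<bar> \<le> t/2" using tp by (metis abs_le_square_iff abs_of_pos half_gt_zero)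
    hence "\<bar>2*a*u/t\<bar> \<le> a" using a tp by (simp add: abs_mult divide_le_eq)
    hence w: "-a \<le> 2*a*u/t" "2*a*u/t \<le> a" using abs_le_D1 abs_le_D2 by fastforce+
    have A0: "A \<ge> 0" and B0: "B \<ge> 0" using t w unfolding A_def B_def by linarith+
    have pos: "(t^2 - 4*a^2)/4 * S \<ge> 0" using S tp(2) by simp
    have "p^2 \<le> A^2" using eqA pos by linarith
    hence "p \<le> A" using A0 by (rule power2_le_imp_le)
    moreover have "q^2 \<le> B^2" using eqB pos by linarith
    hence "q \<le> B" using B0 by (rule power2_le_imp_le)
    ultimately show "sqrt ((u-a)^2 + r) + sqrt ((u+a)^2 + r) \<le> t" using AB unfolding p_def q_def by linarith
  qed
qed

lemma fm_eq: "focus_minus a k = - focus_plus a k"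
  by (simp add: vec_eq_iff focus_minus_def focus_plus_def)

lemma td_sqrt:
  fixes x :: "real^'n"
  shows "transverse_diam a k x = sqrt ((x$k - a)^2 + (\<Sum>i\<in>UNIV-{k}. (x$i)^2))
            + sqrt ((x$k + a)^2 + (\<Sum>i\<in>UNIV-{k}. (x$i)^2))"
  unfolding transverse_diam_def fp_sq[symmetric] by simp

lemma td_meas[measurable]: "transverse_diam a k \<in> borel_measurable borel"
  unfolding transverse_diam_def by measurable

lemma td_cont: "continuous_on UNIV (transverse_diam a k)"
  unfolding transverse_diam_def by (intro continuous_intros)

lemma hs_borel[measurable]: "hyperspheroid a k t \<in> sets borel"
  unfolding hyperspheroid_def by measurable

lemma hs_bounded: "bounded (hyperspheroid a k t)"
proof -
  have "hyperspheroid a k t \<subseteq> cball 0 (t/2)"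
  proof
    fix x assume "x \<in> hyperspheroid a k t"
    hence h: "norm (x - focus_plus a k) + norm (x - focus_minus a k) \<le> t"
      by (simp add: hyperspheroid_def transverse_diam_def)
    have "2 *\<^sub>R x = (x - focus_plus a k) + (x - focus_minus a k)" unfolding fm_eq scaleR_2 by (simp add: algebra_simps)
    hence "2 * norm x \<le> norm (x - focus_plus a k) + norm (x - focus_minus a k)"
      by (metis norm_scaleR norm_triangle_ineq abs_numeral)
    thus "x \<in> cball 0 (t/2)" using h by simp
  qed
  thus ?thesis by (meson bounded_cball bounded_subset)
qed

lemma td_ge: assumes "a > 0" shows "transverse_diam a k x \<ge> 2*a"
proof -
  have "focus_plus a k - focus_minus a k = (x - focus_minus a k) - (x - focus_plus a k)" by simp
  hence "norm (focus_plus a k - focus_minus a k) \<le> transverse_diam a k x"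
    unfolding transverse_diam_def by (metis add.commute norm_triangle_ineq4)
  moreover have "norm (focus_plus a k - focus_minus a k) = 2*a"
  proof -
    have "focus_plus a k - focus_minus a k = (2*a) *\<^sub>R axis k 1"
      by (simp add: vec_eq_iff focus_minus_def focus_plus_def axis_def)
    thus ?thesis using assms by simp
  qed
  ultimately show ?thesis by simp
qed

definition lam :: "real \<Rightarrow> real \<Rightarrow> 'n \<Rightarrow> 'n \<Rightarrow> real" where
  "lam a t k i = (if i = k then t/2 else sqrt (t^2 - 4*a^2)/2)"

lemma hs_eq:
  fixes k :: "'n::finite"
  assumes a: "a > 0" and t: "t > 2*a"
  shows "hyperspheroid a k t = (\<lambda>y. \<chi> i. lam a t k i * y$i) ` cball 0 1"
proof -
  have "(2*a)^2 < t^2" using a t by (intro power_strict_mono) auto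
  hence tp: "t > 0" "t^2 - 4*a^2 > 0" using a t by (auto simp: power_mult_distrib)
  have lp: "lam a t k i > 0" for i using tp by (simp add: lam_def)
  have lsq: "(lam a t k i)^2 = (if i = k then t^2/4 else (t^2 - 4*a^2)/4)" for i
    using tp by (simp add: lam_def power_divide)
  have "x \<in> hyperspheroid a k t \<longleftrightarrow> x \<in> (\<lambda>y. \<chi> i. lam a t k i * y$i) ` cball 0 1" for x
  proof -
    define u where "u = x$k"
    define r where "r = (\<Sum>i\<in>UNIV-{k}. (x$i)^2)"
    define y where "y = (\<chi> i. x$i / lam a t k i)"
    have r0: "r \<ge> 0" by (simp add: r_def sum_nonneg)
    have "x \<in> hyperspheroid a k t \<longleftrightarrow> 4*u^2/t^2 + 4*r/(t^2 - 4*a^2) \<le> 1"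
      unfolding hyperspheroid_def mem_Collect_eq td_sqrt u_def[symmetric] r_def[symmetric]
      by (rule core2d[OF a t r0])
    also have "4*u^2/t^2 + 4*r/(t^2 - 4*a^2) = norm y ^ 2"
    proof -
      have "norm y ^ 2 = (y$k)^2 + (\<Sum>i\<in>UNIV-{k}. (y$i)^2)"
        by (simp add: norm_sq_vec sum.remove)
      also have "(\<Sum>i\<in>UNIV-{k}. (y$i)^2) = (\<Sum>i\<in>UNIV-{k}. 4 * (x$i)^2 / (t^2 - 4*a^2))"
        by (rule sum.cong) (auto simp: y_def power_divide lsq)
      also have "\<dots> = 4*r/(t^2 - 4*a^2)"
        by (simp add: r_def sum_divide_distrib sum_distrib_left)
      finally show ?thesis by (simp add: y_def power_divide lsq u_def)
    qed
    also have "norm y ^ 2 \<le> 1 \<longleftrightarrow> y \<in> cball 0 1" by (simp add: power_le_one_iff)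
    also have "y \<in> cball 0 1 \<longleftrightarrow> x \<in> (\<lambda>y. \<chi> i. lam a t k i * y$i) ` cball 0 1"
    proof
      assume "y \<in> cball 0 1"
      moreover have "x = (\<chi> i. lam a t k i * y$i)"
        using lp by (simp add: vec_eq_iff y_def) (metis less_irrefl)
      ultimately show "x \<in> (\<lambda>y. \<chi> i. lam a t k i * y$i) ` cball 0 1" by blast
    next
      assume "x \<in> (\<lambda>y. \<chi> i. lam a t k i * y$i) ` cball 0 1"
      then obtain z where z: "z \<in> cball 0 1" "x = (\<chi> i. lam a t k i * z$i)" by blast
      have "y = z" using lp unfolding y_def z(2) by (simp add: vec_eq_iff) (metis less_irrefl)
      thus "y \<in> cball 0 1" using z by simp
    qed
    finally show ?thesis .
  qed
  thus ?thesis by blast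
qed


lemma hs_measure:
  fixes k :: "'n::finite"
  assumes a: "a > 0" and t: "t > 2*a"
  shows "emeasure lborel (hyperspheroid a k t)
     = ennreal (measure lborel (cball (0::real^'n) 1) * (t/2) * (sqrt (t^2 - 4*a^2)/2)^(CARD('n) - 1))"
proof -
  have "(2*a)^2 < t^2" using a t by (intro power_strict_mono) auto
  hence tp: "t > 0" "t^2 - 4*a^2 > 0" using a t by (auto simp: power_mult_distrib)
  have pr: "prod (lam a t k) UNIV = (t/2) * (sqrt (t^2 - 4*a^2)/2)^(CARD('n) - 1)"
  proof -
    have "prod (lam a t k) UNIV = lam a t k k * prod (lam a t k) (UNIV - {k})"
      by (simp add: prod.remove)
    also have "prod (lam a t k) (UNIV - {k}) = prod (\<lambda>_. sqrt (t^2 - 4*a^2)/2) (UNIV - {k})"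
      by (rule prod.cong) (auto simp: lam_def)
    finally show ?thesis by (simp add: lam_def card_Diff_singleton)
  qed
  have "measure lebesgue (hyperspheroid a k t) = \<bar>prod (lam a t k) UNIV\<bar> * measure lebesgue (cball (0::real^'n) 1)"
    unfolding hs_eq[OF a t] by (rule measure_stretch) simp
  also have "\<dots> = measure lborel (cball (0::real^'n) 1) * (t/2) * (sqrt (t^2 - 4*a^2)/2)^(CARD('n) - 1)"
    unfolding pr using tp by simp
  finally have m: "measure lborel (hyperspheroid a k t) = measure lborel (cball (0::real^'n) 1) * (t/2) * (sqrt (t^2 - 4*a^2)/2)^(CARD('n) - 1)"
    by simp
  have "emeasure lborel (hyperspheroid a k t) = ennreal (measure lborel (hyperspheroid a k t))"
    using emeasure_bounded_finite[OF hs_bounded[of a k t]] by (intro emeasure_eq_ennreal_measure) (simp add: less_top)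
  thus ?thesis using m by simp
qed

lemma t_integral:
  fixes K V c d :: real and m :: nat
  assumes m: "m \<ge> 1" and c: "0 < c" "c < d"
  defines "h \<equiv> \<lambda>t. V - (if t \<le> c then 0 else K * (t/2) * (sqrt (t^2 - c^2)/2)^m)"
  shows "(h has_integral (V*d - K / 2^(m+1) * sqrt (d^2 - c^2)^(m+2) / (m+2))) {0..d}"
proof -
  have h1: "(h has_integral (V*c)) {0..c}"
  proof -
    have "((\<lambda>t. V) has_integral (measure lborel {0..c} *\<^sub>R V)) {0..c}" by (rule has_integral_const_real)
    hence "((\<lambda>t. V) has_integral (V*c)) {0..c}" using c by (simp add: mult.commute)
    thus ?thesis by (rule has_integral_eq[rotated]) (simp add: h_def)
  qed
  define F where "F = (\<lambda>t. V*t - K / 2^(m+1) * sqrt (t^2 - c^2)^(m+2) / (m+2))"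
  define g where "g = (\<lambda>t. V - K * (t/2) * (sqrt (t^2 - c^2)/2)^m)"
  have "(g has_integral (F d - F c)) {c..d}"
  proof (rule fundamental_theorem_of_calculus_interior)
    show "c \<le> d" using c by simp
    show "continuous_on {c..d} F" unfolding F_def by (intro continuous_intros) auto
    fix t assume t: "t \<in> {c<..<d}"
    have "(c)^2 < t^2" using c t by (intro power_strict_mono) auto
    hence tp: "t^2 - c^2 > 0" by simp
    define s where "s = sqrt (t*t - c*c)"
    have s0: "s > 0" using tp by (simp add: s_def power2_eq_square)
    have pw: "s ^ (m - Suc 0) = s^m / s" using m s0
      by (cases m) auto
    have m2: "2 + real m \<noteq> 0" "4 + 2 * real m \<noteq> 0" by linarith+
    have "(F has_real_derivative g t) (at t)"
      unfolding F_def g_def using tp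
      apply (auto intro!: derivative_eq_intros simp: power2_eq_square s_def[symmetric])
      using s0 apply (simp add: pw power_divide field_simps)
      apply (subst divide_eq_eq)
      apply (split if_split, intro conjI impI)
       apply (simp add: algebra_simps)
      using s0 by (smt (verit) mult_nonneg_nonneg mult_pos_pos of_nat_0_le_iff zero_less_power)
    thus "(F has_vector_derivative g t) (at t)"
      by (simp add: has_real_derivative_iff_has_vector_derivative)
  qed
  hence h2: "(h has_integral (F d - F c)) {c..d}"
  proof (rule has_integral_eq[rotated])
    fix t assume "t \<in> {c..d}"
    thus "g t = h t" using m by (cases "t = c") (auto simp: g_def h_def)
  qed
  have "(h has_integral (V*c + (F d - F c))) {0..d}"
    using c by (intro has_integral_combine[OF _ _ h1 h2]) auto
  moreover have "V*c + (F d - F c) = V*d - K / 2^(m+1) * sqrt (d^2 - c^2)^(m+2) / (m+2)"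
    by (simp add: F_def algebra_simps)
  ultimately show ?thesis by simp
qed


theorem mainTheorem1:
  fixes a d :: real and k :: "'n::finite"
  assumes "CARD('n) \<ge> 2" and "a > 0" and "d > 2 * a"
  shows "(\<integral>x. transverse_diam a k x \<partial>(uniform_measure lborel (hyperspheroid a k d)))
           = (real CARD('n) * d^2 + (2 * a)^2) / ((real CARD('n) + 1) * d)"
proof -
  note n2 = assms(1) and a = assms(2) and dc = assms(3)
  define D where "D = transverse_diam a k"
  define E where "E = hyperspheroid a k d"
  define m where "m = CARD('n) - 1"
  define c where "c = 2*a"
  define K where "K = measure lborel (cball (0::real^'n) 1)"
  define W where "W = (\<lambda>t::real. if t \<le> c then 0 else K * (t/2) * (sqrt (t^2 - c^2)/2)^m)"
  define V where "V = W d"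
  define h where "h = (\<lambda>t. V - W t)"
  define I where "I = V*d - K / 2^(m+1) * sqrt (d^2 - c^2)^(m+2) / (m+2)"
  have m1: "m \<ge> 1" using n2 by (simp add: m_def)
  have c0: "c > 0" and cd: "c < d" using a dc by (simp_all add: c_def)
  have c2: "c^2 = 4*a^2" by (simp add: c_def power_mult_distrib)
  have Kpos: "K > 0" unfolding K_def by simp
  have Dge: "D x \<ge> c" for x using td_ge[OF a] by (simp add: D_def c_def)
  have W0: "W t \<ge> 0" for t
  proof (cases "t \<le> c")
    case False thus ?thesis using Kpos c0 by (simp add: W_def)
  qed (simp add: W_def)
  have Wmono: "W t \<le> V" if "t \<le> d" for t
  proof (cases "t \<le> c")
    case True thus ?thesis using W0[of d] by (simp add: W_def V_def)
  next
    case False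
    have "sqrt (t^2 - c^2) \<le> sqrt (d^2 - c^2)"
      using that False c0 by (intro real_sqrt_le_mono diff_right_mono power_mono) auto
    moreover have "c^2 \<le> t^2" using False c0 by (intro power_mono) auto
    ultimately have "(sqrt (t^2 - c^2)/2)^m \<le> (sqrt (d^2 - c^2)/2)^m"
      by (intro power_mono) auto
    hence "K * (t/2) * (sqrt (t^2 - c^2)/2)^m \<le> K * (d/2) * (sqrt (d^2 - c^2)/2)^m"
      using Kpos False c0 that by (intro mult_mono) auto
    thus ?thesis using False cd by (simp add: W_def V_def)
  qed
  have Vpos: "V > 0"
  proof -
    have "c^2 < d^2" using c0 cd by (intro power_strict_mono) auto
    thus ?thesis using Kpos c0 cd by (simp add: V_def W_def)
  qed
  have emW: "emeasure lborel (hyperspheroid a k t) = ennreal (W t)" if "t \<noteq> c" for t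
  proof (cases "t < c")
    case True
    have "hyperspheroid a k t = {}" using Dge True unfolding hyperspheroid_def D_def by (smt (verit) empty_Collect_eq)
    thus ?thesis using True by (simp add: W_def)
  next
    case False
    hence t: "t > 2*a" using that by (simp add: c_def)
    show ?thesis unfolding hs_measure[OF a t] using False that
      by (simp add: W_def m_def c2 c_def K_def)
  qed
  have emE: "emeasure lborel E = ennreal V"
    unfolding E_def V_def using emW[of d] cd by simp
  have step2: "emeasure lborel {x \<in> E. t < D x} = ennreal (h t)"
    if t: "t \<le> d" "t \<noteq> c" for t
  proof -
    have eq: "{x \<in> E. t < D x} = E - hyperspheroid a k t"
      by (auto simp: E_def D_def hyperspheroid_def)
    have sub: "hyperspheroid a k t \<subseteq> E" using t by (auto simp: E_def hyperspheroid_def)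
    have fin: "emeasure lborel (hyperspheroid a k t) \<noteq> \<infinity>"
      using emeasure_bounded_finite[OF hs_bounded[of a k t]] by (simp add: less_top)
    have "emeasure lborel {x \<in> E. t < D x} = emeasure lborel E - emeasure lborel (hyperspheroid a k t)"
      unfolding eq by (rule emeasure_Diff[OF fin _ _ sub]) (auto simp: E_def)
    also have "\<dots> = ennreal (h t)" using emE emW[OF t(2)] W0 by (simp add: h_def ennreal_minus)
    finally show ?thesis .
  qed
  have hnn: "0 \<le> h t" if "t \<in> {0..d}" for t using Wmono that by (simp add: h_def)
  have hint: "(h has_integral I) {0..d}"
  proof -
    have "h = (\<lambda>t. V - (if t \<le> c then 0 else K * (t/2) * (sqrt (t^2 - c^2)/2)^m))"
      by (simp add: h_def W_def)
    thus ?thesis unfolding I_def using t_integral[OF m1 c0 cd] by simp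
  qed
  have Dnn: "D x \<ge> 0" for x using Dge[of x] c0 by simp
  define f where "f = (\<lambda>(x::real^'n, t::real). if 0 \<le> t \<and> t < D x \<and> x \<in> E then 1 else (0::ennreal))"
  have Dm[measurable]: "D \<in> borel_measurable lborel" unfolding D_def by simp
  have Em[measurable]: "E \<in> sets lborel" unfolding E_def by simp
  have fm: "f \<in> borel_measurable (lborel \<Otimes>\<^sub>M lborel)" unfolding f_def by measurable
  have PS: "pair_sigma_finite (lborel::(real^'n) measure) (lborel::real measure)"
    by (intro pair_sigma_finite.intro lborel.sigma_finite_measure_axioms)
  have N: "(\<integral>\<^sup>+x. ennreal (D x) * indicator E x \<partial>lborel) = ennreal I"
  proof -
    have "(\<integral>\<^sup>+x. ennreal (D x) * indicator E x \<partial>lborel) = (\<integral>\<^sup>+x. \<integral>\<^sup>+t. f (x,t) \<partial>lborel \<partial>lborel)"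
    proof (rule nn_integral_cong)
      fix x :: "real^'n"
      have "(\<integral>\<^sup>+t. f (x,t) \<partial>lborel) = (\<integral>\<^sup>+t. indicator E x * indicator {0..<D x} t \<partial>lborel)"
        by (rule nn_integral_cong) (auto simp: f_def split: split_indicator)
      also have "\<dots> = indicator E x * emeasure lborel {0..<D x}"
        by (rule nn_integral_cmult_indicator) simp
      also have "\<dots> = ennreal (D x) * indicator E x" using Dnn[of x] by (simp add: mult.commute)
      finally show "ennreal (D x) * indicator E x = (\<integral>\<^sup>+t. f (x,t) \<partial>lborel)" by simp
    qed
    also have "\<dots> = (\<integral>\<^sup>+t. \<integral>\<^sup>+x. f (x,t) \<partial>lborel \<partial>lborel)"
      using pair_sigma_finite.Fubini'[OF PS, of "\<lambda>x t. f (x,t)"] fm by simp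
    also have "\<dots> = (\<integral>\<^sup>+t. ennreal (h t) * indicator {0..d} t \<partial>lborel)"
    proof (rule nn_integral_cong_AE)
      show "AE t in lborel. (\<integral>\<^sup>+x. f (x,t) \<partial>lborel) = ennreal (h t) * indicator {0..d} t"
        using AE_lborel_singleton[of c]
      proof eventually_elim
        fix t :: real assume tc: "t \<noteq> c"
        have "(\<integral>\<^sup>+x. f (x,t) \<partial>lborel) = (\<integral>\<^sup>+x. indicator {x \<in> E. 0 \<le> t \<and> t < D x} x \<partial>lborel)"
          by (rule nn_integral_cong) (auto simp: f_def split: split_indicator)
        also have "\<dots> = emeasure lborel {x \<in> E. 0 \<le> t \<and> t < D x}"
          by (rule nn_integral_indicator) measurable
        also have "\<dots> = ennreal (h t) * indicator {0..d} t"
        proof (cases "t \<in> {0..d}")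
          case True thus ?thesis using step2[of t] tc by simp
        next
          case False
          have e: "{x \<in> E. 0 \<le> t \<and> t < D x} = {}"
            using False by (auto simp: E_def D_def hyperspheroid_def)
          show ?thesis unfolding e using False by simp
        qed
        finally show "(\<integral>\<^sup>+x. f (x,t) \<partial>lborel) = ennreal (h t) * indicator {0..d} t" .
      qed
    qed
    also have "\<dots> = ennreal I" by (rule nn_integral_has_integral_lebesgue'[OF hnn hint])
    finally show ?thesis .
  qed
  have I0: "I \<ge> 0" by (rule has_integral_nonneg[OF hint hnn])
  have "(\<integral>x. D x \<partial>uniform_measure lborel E) = enn2real (\<integral>\<^sup>+x. ennreal (D x) \<partial>uniform_measure lborel E)"
    by (rule integral_eq_nn_integral) (auto simp: Dnn)
  also have "(\<integral>\<^sup>+x. ennreal (D x) \<partial>uniform_measure lborel E) = ennreal I / ennreal V"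
    by (subst nn_integral_uniform_measure) (simp_all add: N emE hs_borel Em[simplified])
  also have "\<dots> = ennreal (I / V)" using I0 Vpos by (simp add: divide_ennreal)
  finally have res: "(\<integral>x. D x \<partial>uniform_measure lborel E) = I / V" using I0 Vpos by simp
  define \<beta> where "\<beta> = sqrt (d^2 - c^2)"
  have "c^2 < d^2" using c0 cd by (intro power_strict_mono) auto
  hence b0: "\<beta> > 0" and b2: "\<beta>^2 = d^2 - c^2" by (simp_all add: \<beta>_def)
  have Veq: "V = K * (d/2) * (\<beta>/2)^m" using cd by (simp add: V_def W_def \<beta>_def)
  have Ieq: "I = V*d - K / 2^(m+1) * \<beta>^(m+2) / (m+2)" by (simp add: I_def \<beta>_def)
  have nm: "real CARD('n) = real m + 1" using n2 by (simp add: m_def)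
  have "I / V = d - \<beta>^2 / ((m+2) * d)"
  proof -
    have bm: "\<beta>^m > 0" using b0 by simp
    define X where "X = K / 2^(m+1) * \<beta>^(m+2) / (m+2)"
    have "I / V = (V*d - X) / V" by (simp add: Ieq X_def)
    also have "\<dots> = d - X / V" using Vpos by (simp add: diff_divide_distrib)
    also have "X / V = \<beta>^2 / ((m+2) * d)"
    proof -
      have m2: "real m + 2 > 0" by simp
      have "X / V = (K / 2^(m+1) * \<beta>^(m+2) / (m+2)) / (K * (d/2) * (\<beta>^m/2^m))"
        by (simp add: X_def Veq power_divide)
      also have "\<dots> = \<beta>^2 / ((m+2) * d)"
      proof -
        have d0: "d > 0" using cd c0 by simp
        have n1: "d * real m + d * 2 \<noteq> 0" using d0 by (smt (verit) mult_nonneg_nonneg of_nat_0_le_iff)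
        have n2: "K * (d * (\<beta> ^ m * (4 * 2 ^ m))) + K * (d * (real m * (2 * (\<beta> ^ m * 2 ^ m)))) \<noteq> 0"
          using Kpos bm d0 by (intro order.strict_implies_not_eq[symmetric] add_pos_nonneg) auto
        show ?thesis
          using Kpos bm d0 n1 n2 by (simp add: power_add field_simps power2_eq_square)
      qed
      finally show ?thesis .
    qed
    finally show ?thesis .
  qed
  also have "\<dots> = (real CARD('n) * d^2 + (2 * a)^2) / ((real CARD('n) + 1) * d)"
  proof -
    have d0: "d > 0" using cd c0 by simp
    have n1: "d * real m + d * 2 \<noteq> 0" using d0 by (smt (verit) mult_nonneg_nonneg of_nat_0_le_iff)
    show ?thesis unfolding b2 nm using d0 n1 by (simp add: c_def field_simps power2_eq_square)
  qed
  finally show ?thesis using res by (simp add: D_def E_def)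
qed

end
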